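(* For all coprime positive integers $a, b$, the binary word $\mathrm{gen}(a,b)$ has exactly $a+b-1$ distinct subsequences, i.e. $\mathsf{P}(\mathrm{gen}(a,b)) = a+b-1$.
   Context: Words are over the alphabet $\{\mathsf{A},\mathsf{B}\}$; $\mathsf{0}$ denotes the empty word and $\circ$ concatenation. $\mathsf{P}(\mathfrak{s})$ denotes the number of distinct words that are subsequences (not necessarily contiguous) of $\mathfrak{s}$, the empty word included. For coprime integers $a,b\ge 1$ the word $\mathrm{gen}(a,b)$ is defined recursively by: $\mathrm{gen}(1,1)=\mathsf{0}$; $\mathrm{gen}(a,b)=\mathsf{A}\circ\mathrm{gen}(a-b,b)$ if $a>b$; $\mathrm{gen}(a,b)=\mathsf{B}\circ\mathrm{gen}(a,b-a)$ if $b>a$ (this follows the Euclidean algorithm and is well defined). *)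

theory Defs
  imports Main "HOL-Library.Sublist"
begin

datatype letter = A | B

type_synonym word = "letter list"

definition P :: "word \<Rightarrow> nat" where
  "P s = card {u. subseq u s}"

text \<open>gen(a,b) following the Euclidean algorithm. Only meaningful for coprime a,b \<ge> 1;
  for other arguments the value is an arbitrary convention (Nil).\<close>
function gen :: "nat \<Rightarrow> nat \<Rightarrow> word" where
  "gen a b = (if a = 0 \<or> b = 0 \<or> a = b then []
              else if a > b then A # gen (a - b) b
              else B # gen a (b - a))"
  by auto
termination by (relation "measure (\<lambda>(a,b). a + b)") auto

end

theory Submission
  imports Defs
begin

definition Q :: "letter \<Rightarrow> word \<Rightarrow> nat" where
  "Q x w = card {u. subseq (x#u) w}"

lemma fin_sub: "finite {u. subseq u w}"
  by (metis List.finite_set set_subseqs_eq)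

lemma fin_subx: "finite {u. subseq (x#u) w}"
  by (rule finite_subset[OF _ fin_sub[of w]]) (auto dest: subseq_Cons')

lemma P_split: "P w = 1 + Q A w + Q B w"
proof -
  have eq: "{u. subseq u w} = insert [] ((Cons A) ` {u. subseq (A#u) w} \<union> (Cons B) ` {u. subseq (B#u) w})"
  proof (rule set_eqI)
    fix u show "u \<in> {u. subseq u w} \<longleftrightarrow> u \<in> insert [] ((Cons A) ` {u. subseq (A#u) w} \<union> (Cons B) ` {u. subseq (B#u) w})"
      by (cases u; cases "hd u") auto
  qed
  have "card {u. subseq u w} = 1 + card ((Cons A) ` {u. subseq (A#u) w} \<union> (Cons B) ` {u. subseq (B#u) w})"
    unfolding eq by (subst card_insert_disjoint) (auto intro: fin_subx)
  also have "\<dots> = 1 + card ((Cons A) ` {u. subseq (A#u) w}) + card ((Cons B) ` {u. subseq (B#u) w})"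
    by (subst card_Un_disjoint) (auto intro: fin_subx)
  also have "\<dots> = 1 + Q A w + Q B w"
    unfolding Q_def by (simp add: card_image)
  finally show ?thesis unfolding P_def .
qed

lemma Q_same: "Q x (x#w) = P w"
  unfolding Q_def P_def by simp

lemma Q_other: "x \<noteq> y \<Longrightarrow> Q x (y#w) = Q x w"
  unfolding Q_def by simp

lemma main: "a \<ge> 1 \<Longrightarrow> b \<ge> 1 \<Longrightarrow> coprime a b \<Longrightarrow> Q A (gen a b) = a - 1 \<and> Q B (gen a b) = b - 1"
proof (induction a b rule: gen.induct)
  case (1 a b)
  show ?case
  proof (cases "a = b")
    case True
    then have "a = 1" using 1(5) by simp
    then show ?thesis using True by (simp add: Q_def)
  next
    case False
    show ?thesis
    proof (cases "a > b")
      case True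
      have c: "coprime (a - b) b" using 1(5) True
        by (metis coprime_diff_one_left_nat coprime_commute coprime_iff_gcd_eq_1 gcd_diff1_nat less_imp_le)
      have IH: "Q A (gen (a-b) b) = a - b - 1 \<and> Q B (gen (a-b) b) = b - 1"
        using 1(1) 1(3,4) c True False by auto
      have g: "gen a b = A # gen (a-b) b" using True False 1(3,4) by simp
      show ?thesis unfolding g using IH True 1(3,4)
        by (simp add: Q_same Q_other P_split)
    next
      case F2: False
      then have lt: "a < b" using False by simp
      have c: "coprime a (b - a)" using 1(5) lt
        by (metis coprime_commute coprime_iff_gcd_eq_1 gcd_diff1_nat less_imp_le)
      have IH: "Q A (gen a (b-a)) = a - 1 \<and> Q B (gen a (b-a)) = b - a - 1"
        using 1(2) 1(3,4) c lt False by auto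
      have g: "gen a b = B # gen a (b-a)" using lt False 1(3,4) by simp
      show ?thesis unfolding g using IH lt 1(3,4)
        by (simp add: Q_same Q_other P_split)
    qed
  qed
qed

theorem theorem1:
  fixes a b :: nat
  assumes "a \<ge> 1" and "b \<ge> 1" and "coprime a b"
  shows "P (gen a b) = a + b - 1"
  using main[OF assms] assms by (simp add: P_split)

end
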